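(* Let $r\geq 2$ be an integer and let $b$ be a real number with $b\leq (r-1)^{r-1}$. Then every coefficient of the power series expansion of $\dfrac{1}{1-rt+bt^r}$ in $t$ around $t=0$ is strictly positive. *)

theory Defs
  imports "HOL-Computational_Algebra.Formal_Power_Series"
begin

end

theory Submission
  imports Defs
begin

lemma chain_ge:
  fixes g :: "nat \<Rightarrow> real"
  assumes "m \<le> i" "c \<ge> 0"
    and "\<And>k. m < k \<Longrightarrow> k \<le> i \<Longrightarrow> g k \<ge> c * g (k - 1)"
    and "\<And>k. k \<le> i \<Longrightarrow> g k \<ge> 0"
  shows "g i \<ge> c ^ (i - m) * g m"
  using assms(1,3,4)
proof (induction i rule: dec_induct)
  case base
  then show ?case by simp
next
  case (step i)
  have ih: "g i \<ge> c ^ (i - m) * g m" using step by auto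
  have "g (Suc i) \<ge> c * g i" using step.prems(1)[of "Suc i"] step.hyps by simp
  moreover have "c * g i \<ge> c * (c ^ (i - m) * g m)" using ih assms(2) by (rule mult_left_mono)
  moreover have "Suc i - m = Suc (i - m)" using step.hyps by simp
  ultimately show ?case by (simp add: mult.assoc)
qed

theorem lemma2:
  fixes r :: nat and b :: real
  assumes "r \<ge> 2" and "b \<le> (real r - 1) ^ (r - 1)"
  shows "\<forall>n. fps_nth (inverse (1 - fps_const (real r) * fps_X + fps_const b * fps_X ^ r)) n > 0"
proof -
  define F where "F = 1 - fps_const (real r) * fps_X + fps_const b * fps_X ^ r"
  define g where "g = fps_nth (inverse F)"
  have F0: "fps_nth F 0 = 1" using assms(1) by (simp add: F_def)
  have FG: "F * inverse F = 1" by (rule inverse_mult_eq_1') (simp add: F0)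
  have FGexp: "F * inverse F = inverse F - fps_const (real r) * (fps_X * inverse F)
      + fps_const b * (fps_X ^ r * inverse F)"
    by (simp add: F_def algebra_simps)
  have rec: "g n = real r * g (n - 1) - (if n < r then 0 else b * g (n - r))" if "n \<ge> 1" for n
  proof -
    have "fps_nth (F * inverse F) n = 0" using FG that by simp
    hence "g n - real r * g (n - 1) + (if n < r then 0 else b * g (n - r)) = 0"
      unfolding FGexp g_def using that by (simp add: fps_X_power_mult_nth split: if_splits)
    thus ?thesis by linarith
  qed
  have g0: "g 0 = 1"
  proof -
    have "fps_nth (F * inverse F) 0 = 1" using FG by simp
    thus ?thesis unfolding FGexp g_def using assms(1) by (simp add: fps_X_power_mult_nth)
  qed
  define c where "c = real r - 1"
  have c1: "c \<ge> 1" using assms(1) by (simp add: c_def)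
  have P: "\<forall>k\<le>n. g k > 0 \<and> (k \<ge> 1 \<longrightarrow> g k \<ge> c * g (k - 1))" for n
  proof (induction n)
    case 0
    then show ?case using g0 by simp
  next
    case (Suc n)
    have key: "b * g (Suc n - r) \<le> g n" if "\<not> Suc n < r"
    proof -
      have le: "Suc n - r \<le> n" using that assms(1) by simp
      have ch: "g n \<ge> c ^ (n - (Suc n - r)) * g (Suc n - r)"
        by (rule chain_ge[OF le]) (use Suc.IH c1 in auto)
      have "n - (Suc n - r) = r - 1" using that assms(1) by simp
      hence ch': "g n \<ge> c ^ (r - 1) * g (Suc n - r)" using ch by simp
      have "g (Suc n - r) \<ge> 0" using Suc.IH le by (meson less_imp_le)
      hence "b * g (Suc n - r) \<le> c ^ (r - 1) * g (Suc n - r)"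
        using assms(2) by (simp add: c_def mult_right_mono)
      thus ?thesis using ch' by linarith
    qed
    have gn: "g n > 0" using Suc.IH by auto
    have ratio: "g (Suc n) \<ge> c * g n"
    proof -
      have "g (Suc n) = real r * g n - (if Suc n < r then 0 else b * g (Suc n - r))"
        using rec[of "Suc n"] by simp
      moreover have "(if Suc n < r then 0 else b * g (Suc n - r)) \<le> g n"
        using key gn by auto
      ultimately show ?thesis by (simp add: c_def algebra_simps)
    qed
    have "g (Suc n) > 0"
    proof -
      have "c * g n \<ge> g n" using c1 gn by simp
      thus ?thesis using ratio gn by linarith
    qed
    then show ?case using Suc.IH ratio by (auto simp: le_Suc_eq)
  qed
  show ?thesis using P unfolding g_def F_def by blast
qed

end
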